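(* Let $\gamma\ge6/5$ and consider the SIEMS4 coefficients $(a_0,\dots,a_3)=\big(\gamma^3+\tfrac{3\gamma^2}{2}-\tfrac{\gamma}{2}+\tfrac1{12},\ -3\gamma^3-\tfrac{3\gamma^2}{2}+3\gamma-\tfrac5{12},\ 3\gamma^3-\tfrac{3\gamma^2}{2}-\tfrac{3\gamma}{2}+\tfrac{13}{12},\ -\gamma^3+\tfrac{3\gamma^2}{2}-\gamma+\tfrac14\big)$, $(b_0,\dots,b_4)=(\gamma^3,\ 3\gamma^2-3\gamma^3,\ 3\gamma^3-6\gamma^2+3\gamma,\ -\gamma^3+3\gamma^2-3\gamma+1,\ 0)$, $(c_0,\dots,c_3)=(\gamma^3+3\gamma^2,\ -3\gamma^3-6\gamma^2+3\gamma,\ 3\gamma^3+3\gamma^2-3\gamma+1,\ -\gamma^3)$. Then $$\sigma_{\mathrm{F}}=1,\quad\sigma_{\mathrm{E}}=\frac{3(8\gamma^3+12\gamma^2-6\gamma+1)}{4(6\gamma^3-3\gamma+1)},\quad\lambda_{\mathrm{I}}=\frac{3(2\gamma-1)^3}{4(6\gamma^3-3\gamma+1)},$$ so that $\mathfrak{I}_{\mathrm{IE}}=\dfrac{(2\gamma-1)^3}{8\gamma^3+12\gamma^2-6\gamma+1}$.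
   Context: For coefficient vectors $(a_j)_{j=0}^{\mathrm{k}-1}$, $(b_j)_{j=0}^{\mathrm{k}}$, $(c_j)_{j=0}^{\mathrm{k}-1}$ define $a(\theta)=\sum_j a_je^{\imath j\theta}$, $b(\theta)=\sum_j b_je^{\imath j\theta}$, $c(\theta)=\sum_jc_je^{\imath j\theta}$ and $\sigma_{\mathrm{F}}=\max_{\theta\in[0,2\pi)}|1/a(\theta)|$, $\sigma_{\mathrm{E}}=\max_{\theta\in[0,2\pi)}|c(\theta)/a(\theta)|$, $\lambda_{\mathrm{I}}=\min_{\theta\in[0,2\pi)}\Re[b(\theta)/a(\theta)]$, $\mathfrak{I}_{\mathrm{IE}}=\lambda_{\mathrm{I}}/\sigma_{\mathrm{E}}$. Here $\mathrm{k}=4$. *)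

theory Defs
  imports "HOL-Analysis.Analysis"
begin

definition symb :: "(nat \<Rightarrow> real) \<Rightarrow> nat \<Rightarrow> real \<Rightarrow> complex" where
  "symb v n \<theta> = (\<Sum>j<n. complex_of_real (v j) * exp (\<i> * of_nat j * complex_of_real \<theta>))"

text \<open>k = 4: a and c have k = 4 coefficients, b has k+1 = 5.\<close>
definition sigmaF :: "(nat \<Rightarrow> real) \<Rightarrow> real" where
  "sigmaF a = (SUP \<theta>\<in>{0..<2*pi}. cmod (1 / symb a 4 \<theta>))"

definition sigmaE :: "(nat \<Rightarrow> real) \<Rightarrow> (nat \<Rightarrow> real) \<Rightarrow> real" where
  "sigmaE a c = (SUP \<theta>\<in>{0..<2*pi}. cmod (symb c 4 \<theta> / symb a 4 \<theta>))"

definition lambdaI :: "(nat \<Rightarrow> real) \<Rightarrow> (nat \<Rightarrow> real) \<Rightarrow> real" where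
  "lambdaI a b = (INF \<theta>\<in>{0..<2*pi}. Re (symb b 5 \<theta> / symb a 4 \<theta>))"

definition IIE :: "(nat \<Rightarrow> real) \<Rightarrow> (nat \<Rightarrow> real) \<Rightarrow> (nat \<Rightarrow> real) \<Rightarrow> real" where
  "IIE a b c = lambdaI a b / sigmaE a c"

definition siems4_a :: "real \<Rightarrow> nat \<Rightarrow> real" where
  "siems4_a g j = [g^3 + 3*g^2/2 - g/2 + 1/12,
                   (-3*g^3 - 3*g^2/2 + 3*g - 5/12),
                   3*g^3 - 3*g^2/2 - 3*g/2 + 13/12,
                   (- (g^3) + 3*g^2/2 - g + 1/4)] ! j"

definition siems4_b :: "real \<Rightarrow> nat \<Rightarrow> real" where
  "siems4_b g j = [g^3, 3*g^2 - 3*g^3, 3*g^3 - 6*g^2 + 3*g, (- (g^3) + 3*g^2 - 3*g + 1), 0] ! j"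

definition siems4_c :: "real \<Rightarrow> nat \<Rightarrow> real" where
  "siems4_c g j = [g^3 + 3*g^2, (-3*g^3 - 6*g^2 + 3*g), 3*g^3 + 3*g^2 - 3*g + 1, - (g^3)] ! j"

end

theory Submission
  imports Defs
begin

lemma expj: "exp (\<i> * of_nat j * complex_of_real \<theta>) = Complex (cos \<theta>) (sin \<theta>) ^ j"
proof -
  have "exp (\<i> * of_nat j * complex_of_real \<theta>) = cis (real j * \<theta>)"
    by (simp add: cis_conv_exp mult.commute mult.left_commute)
  also have "\<dots> = cis \<theta> ^ j" by (simp add: Complex.DeMoivre)
  finally show ?thesis by (simp add: cis.ctr)
qed

lemma symb5: "symb v 5 \<theta> = Complex
   (v 0 + v 1*cos \<theta> + v 2*(2*cos \<theta>^2-1) + v 3*(4*cos \<theta>^3-3*cos \<theta>) + v 4*(8*cos \<theta>^4-8*cos \<theta>^2+1))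
   (sin \<theta>*(v 1 + v 2*(2*cos \<theta>) + v 3*(4*cos \<theta>^2-1) + v 4*(8*cos \<theta>^3-4*cos \<theta>)))"
proof -
  have s2: "sin \<theta>^2 = 1 - cos \<theta>^2" by (simp add: sin_squared_eq)
  show ?thesis
  unfolding symb_def expj
  apply (simp add: eval_nat_numeral complex_eq_iff)
  apply (intro conjI)
  using s2 by algebra+
qed

lemma symb4: "symb v 4 \<theta> = Complex
   (v 0 + v 1*cos \<theta> + v 2*(2*cos \<theta>^2-1) + v 3*(4*cos \<theta>^3-3*cos \<theta>))
   (sin \<theta>*(v 1 + v 2*(2*cos \<theta>) + v 3*(4*cos \<theta>^2-1)))"
proof -
  have s2: "sin \<theta>^2 = 1 - cos \<theta>^2" by (simp add: sin_squared_eq)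
  show ?thesis
  unfolding symb_def expj
  apply (simp add: eval_nat_numeral complex_eq_iff)
  apply (intro conjI)
  using s2 by algebra+
qed

lemma P1id:
  fixes g c t y w a0 a1 a2 a3 :: real
  assumes "t = g - 6/5" "y = 1-c" "w = 1+c"
    "a0 = g^3 + (3/2)*g^2 - (1/2)*g + 1/12" "a1 = -3*g^3 - (3/2)*g^2 + 3*g - 5/12"
    "a2 = 3*g^3 - (3/2)*g^2 - (3/2)*g + 13/12" "a3 = - (g^3) + (3/2)*g^2 - g + 1/4"
  shows "(a0 + a1*c + a2*(2*c^2-1) + a3*(4*c^3-3*c))^2 + (1-c^2)*(a1 + a2*(2*c) + a3*(4*c^2-1))^2 - 1
   = y*((241/1200)*w^3 + (21/20)*t*w^3 + (3/4)*t^2*w^3 + (5257/90000)*y*w^2 + (387/125)*t*y*w^2 + (361/50)*t^2*y*w^2 + (37/5)*t^3*y*w^2 + 3*t^4*y*w^2 + (14624381/2250000)*y^2*w + (1560413/37500)*t*y^2*w + (51063/500)*t^2*y^2*w + (9583/75)*t^3*y^2*w + (427/5)*t^4*y^2*w + (144/5)*t^5*y^2*w + 4*t^6*y^2*w + (14944831/2250000)*y^3 + (370922/9375)*t*y^3 + (11957/125)*t^2*y^3 + (9028/75)*t^3*y^3 + (412/5)*t^4*y^3 + (144/5)*t^5*y^3 + 4*t^6*y^3)"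
  unfolding assms by algebra

lemma P2id:
  fixes g c t y w a0 a1 a2 a3 c0 c1 c2 c3 :: real
  assumes "t = g - 6/5" "y = 1-c" "w = 1+c"
    "a0 = g^3 + (3/2)*g^2 - (1/2)*g + 1/12" "a1 = -3*g^3 - (3/2)*g^2 + 3*g - 5/12"
    "a2 = 3*g^3 - (3/2)*g^2 - (3/2)*g + 13/12" "a3 = - (g^3) + (3/2)*g^2 - g + 1/4"
    "c0 = g^3 + 3*g^2" "c1 = -3*g^3 - 6*g^2 + 3*g" "c2 = 3*g^3 + 3*g^2 - 3*g + 1" "c3 = - (g^3)"
  shows "9*(8*g^3 + 12*g^2 - 6*g + 1)^2 * ((a0 + a1*c + a2*(2*c^2-1) + a3*(4*c^3-3*c))^2 + (1-c^2)*(a1 + a2*(2*c) + a3*(4*c^2-1))^2)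
     - (4 * (6*g^3 - 3*g + 1))^2 * ((c0 + c1*c + c2*(2*c^2-1) + c3*(4*c^3-3*c))^2 + (1-c^2)*(c1 + c2*(2*c) + c3*(4*c^2-1))^2)
   = w*((3616066157/625000)*y^2 + (5083385574/78125)*t*y^2 + (4774256787/15625)*t^2*y^2 + (2512882842/3125)*t^3*y^2 + (825897774/625)*t^4*y^2 + 1413744*t^5*y^2 + (24662144/25)*t^6*y^2 + (2162592/5)*t^7*y^2 + 107712*t^8*y^2 + 11520*t^9*y^2 + (1133013303/312500)*w*y + (796163943/31250)*t*w*y + (475225689/6250)*t^2*w*y + (15556404/125)*t^3*w*y + (3002814/25)*t^4*w*y + (1699272/25)*t^5*w*y + (103584/5)*t^6*w*y + 2592*t^7*w*y + (14426293/25000)*w^2 + (125097/50)*t*w^2 + (213291/50)*t^2*w^2 + (17736/5)*t^3*w^2 + 1422*t^4*w^2 + 216*t^5*w^2)"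
  unfolding assms by algebra

lemma P3id:
  fixes g c t y w a0 a1 a2 a3 b0 b1 b2 b3 :: real
  assumes "t = g - 6/5" "y = 1-c" "w = 1+c"
    "a0 = g^3 + (3/2)*g^2 - (1/2)*g + 1/12" "a1 = -3*g^3 - (3/2)*g^2 + 3*g - 5/12"
    "a2 = 3*g^3 - (3/2)*g^2 - (3/2)*g + 13/12" "a3 = - (g^3) + (3/2)*g^2 - g + 1/4"
    "b0 = g^3" "b1 = 3*g^2 - 3*g^3" "b2 = 3*g^3 - 6*g^2 + 3*g" "b3 = - (g^3) + 3*g^2 - 3*g + 1"
  shows "(4 * (6*g^3 - 3*g + 1)) * ((b0 + b1*c + b2*(2*c^2-1) + b3*(4*c^3-3*c))*(a0 + a1*c + a2*(2*c^2-1) + a3*(4*c^3-3*c))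
        + (1-c^2)*(b1 + b2*(2*c) + b3*(4*c^2-1))*(a1 + a2*(2*c) + a3*(4*c^2-1)))
     - 3*(2*g-1)^3 * ((a0 + a1*c + a2*(2*c^2-1) + a3*(4*c^3-3*c))^2 + (1-c^2)*(a1 + a2*(2*c) + a3*(4*c^2-1))^2)
   = w*((952469/75000)*y^2 + (404087/2500)*t*y^2 + (3512/5)*t^2*y^2 + (22339/15)*t^3*y^2 + 1692*t^4*y^2 + 996*t^5*y^2 + 240*t^6*y^2 + (113623/7500)*w*y + (10516/125)*t*w*y + (8673/50)*t^2*w*y + (791/5)*t^3*w*y + 54*t^4*w*y + (571/200)*w^2 + (141/20)*t*w^2 + (9/2)*t^2*w^2)"
  unfolding assms by algebra

lemma B1nn: fixes t y w :: real assumes "t \<ge> 0" "y \<ge> 0" "w \<ge> 0" shows "0 \<le> (241/1200)*w^3 + (21/20)*t*w^3 + (3/4)*t^2*w^3 + (5257/90000)*y*w^2 + (387/125)*t*y*w^2 + (361/50)*t^2*y*w^2 + (37/5)*t^3*y*w^2 + 3*t^4*y*w^2 + (14624381/2250000)*y^2*w + (1560413/37500)*t*y^2*w + (51063/500)*t^2*y^2*w + (9583/75)*t^3*y^2*w + (427/5)*t^4*y^2*w + (144/5)*t^5*y^2*w + 4*t^6*y^2*w + (14944831/2250000)*y^3 + (370922/9375)*t*y^3 + (11957/125)*t^2*y^3 + (9028/75)*t^3*y^3 + (412/5)*t^4*y^3 + (144/5)*t^5*y^3 + 4*t^6*y^3"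
  using assms by (intro add_nonneg_nonneg mult_nonneg_nonneg zero_le_power; simp)
lemma B2nn: fixes t y w :: real assumes "t \<ge> 0" "y \<ge> 0" "w \<ge> 0" shows "0 \<le> (3616066157/625000)*y^2 + (5083385574/78125)*t*y^2 + (4774256787/15625)*t^2*y^2 + (2512882842/3125)*t^3*y^2 + (825897774/625)*t^4*y^2 + 1413744*t^5*y^2 + (24662144/25)*t^6*y^2 + (2162592/5)*t^7*y^2 + 107712*t^8*y^2 + 11520*t^9*y^2 + (1133013303/312500)*w*y + (796163943/31250)*t*w*y + (475225689/6250)*t^2*w*y + (15556404/125)*t^3*w*y + (3002814/25)*t^4*w*y + (1699272/25)*t^5*w*y + (103584/5)*t^6*w*y + 2592*t^7*w*y + (14426293/25000)*w^2 + (125097/50)*t*w^2 + (213291/50)*t^2*w^2 + (17736/5)*t^3*w^2 + 1422*t^4*w^2 + 216*t^5*w^2"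
  using assms by (intro add_nonneg_nonneg mult_nonneg_nonneg zero_le_power; simp)
lemma B3nn: fixes t y w :: real assumes "t \<ge> 0" "y \<ge> 0" "w \<ge> 0" shows "0 \<le> (952469/75000)*y^2 + (404087/2500)*t*y^2 + (3512/5)*t^2*y^2 + (22339/15)*t^3*y^2 + 1692*t^4*y^2 + 996*t^5*y^2 + 240*t^6*y^2 + (113623/7500)*w*y + (10516/125)*t*w*y + (8673/50)*t^2*w*y + (791/5)*t^3*w*y + 54*t^4*w*y + (571/200)*w^2 + (141/20)*t*w^2 + (9/2)*t^2*w^2"
  using assms by (intro add_nonneg_nonneg mult_nonneg_nonneg zero_le_power; simp)

lemma avals: "siems4_a g 0 = g^3 + (3/2)*g^2 - (1/2)*g + 1/12" "siems4_a g 1 = -3*g^3 - (3/2)*g^2 + 3*g - 5/12"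
  "siems4_a g 2 = 3*g^3 - (3/2)*g^2 - (3/2)*g + 13/12" "siems4_a g 3 = - (g^3) + (3/2)*g^2 - g + 1/4"
  by (simp_all add: siems4_a_def numeral_2_eq_2 numeral_3_eq_3)
lemma bvals: "siems4_b g 0 = g^3" "siems4_b g 1 = 3*g^2 - 3*g^3" "siems4_b g 2 = 3*g^3 - 6*g^2 + 3*g"
  "siems4_b g 3 = - (g^3) + 3*g^2 - 3*g + 1" "siems4_b g 4 = 0"
  by (simp_all add: siems4_b_def eval_nat_numeral)
lemma cvals: "siems4_c g 0 = g^3 + 3*g^2" "siems4_c g 1 = -3*g^3 - 6*g^2 + 3*g"
  "siems4_c g 2 = 3*g^3 + 3*g^2 - 3*g + 1" "siems4_c g 3 = - (g^3)"
  by (simp_all add: siems4_c_def eval_nat_numeral)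

lemma cmod_Complex_sq: "(cmod (Complex x (s*z)))^2 = x^2 + s^2*z^2"
  by (simp add: cmod_power2 power_mult_distrib)

lemma pointwise:
  fixes g \<theta> :: real
  assumes hg: "g \<ge> 6/5"
  defines "A \<equiv> symb (siems4_a g) 4 \<theta>" and "B \<equiv> symb (siems4_b g) 5 \<theta>" and "C \<equiv> symb (siems4_c g) 4 \<theta>"
  defines "D \<equiv> 4 * (6*g^3 - 3*g + 1)" and "N \<equiv> 8*g^3 + 12*g^2 - 6*g + 1"
  shows "cmod A \<ge> 1" "9*N^2*(cmod A)^2 - D^2*(cmod C)^2 \<ge> 0"
    "D * Re (B * cnj A) - 3*(2*g-1)^3 * (cmod A)^2 \<ge> 0"
proof -
  define x where "x = cos \<theta>"
  define t where "t = g - 6/5"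
  define y where "y = 1 - x"
  define w where "w = 1 + x"
  have ht: "t \<ge> 0" using hg t_def by simp
  have hy: "y \<ge> 0" using y_def x_def by simp
  have hw: "w \<ge> 0" using w_def x_def cos_ge_minus_one[of \<theta>] by linarith
  have s2: "sin \<theta>^2 = 1 - x^2" by (simp add: sin_squared_eq x_def)
  note a = avals[of g] and b = bvals[of g] and c = cvals[of g]
  have nA: "(cmod A)^2 = (siems4_a g 0 + siems4_a g 1*x + siems4_a g 2*(2*x^2-1) + siems4_a g 3*(4*x^3-3*x))^2
     + (1-x^2)*(siems4_a g 1 + siems4_a g 2*(2*x) + siems4_a g 3*(4*x^2-1))^2"
    unfolding A_def symb4 cmod_Complex_sq s2 x_def by simp
  have nC: "(cmod C)^2 = (siems4_c g 0 + siems4_c g 1*x + siems4_c g 2*(2*x^2-1) + siems4_c g 3*(4*x^3-3*x))^2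
     + (1-x^2)*(siems4_c g 1 + siems4_c g 2*(2*x) + siems4_c g 3*(4*x^2-1))^2"
    unfolding C_def symb4 cmod_Complex_sq s2 x_def by simp
  have rB: "Re (B * cnj A) = (siems4_b g 0 + siems4_b g 1*x + siems4_b g 2*(2*x^2-1) + siems4_b g 3*(4*x^3-3*x))
       *(siems4_a g 0 + siems4_a g 1*x + siems4_a g 2*(2*x^2-1) + siems4_a g 3*(4*x^3-3*x))
     + (1-x^2)*(siems4_b g 1 + siems4_b g 2*(2*x) + siems4_b g 3*(4*x^2-1))*(siems4_a g 1 + siems4_a g 2*(2*x) + siems4_a g 3*(4*x^2-1))"
  proof -
    have "Re (B * cnj A) = Re B * Re A + Im B * Im A" by simp
    also have "\<dots> = (siems4_b g 0 + siems4_b g 1*x + siems4_b g 2*(2*x^2-1) + siems4_b g 3*(4*x^3-3*x))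
       *(siems4_a g 0 + siems4_a g 1*x + siems4_a g 2*(2*x^2-1) + siems4_a g 3*(4*x^3-3*x))
     + sin \<theta>^2*(siems4_b g 1 + siems4_b g 2*(2*x) + siems4_b g 3*(4*x^2-1))*(siems4_a g 1 + siems4_a g 2*(2*x) + siems4_a g 3*(4*x^2-1))"
      unfolding A_def B_def symb4 symb5 x_def by (simp add: b(5) power2_eq_square)
    finally show ?thesis unfolding s2 .
  qed
  have e1: "(cmod A)^2 - 1 = y*((241/1200)*w^3 + (21/20)*t*w^3 + (3/4)*t^2*w^3 + (5257/90000)*y*w^2 + (387/125)*t*y*w^2 + (361/50)*t^2*y*w^2 + (37/5)*t^3*y*w^2 + 3*t^4*y*w^2 + (14624381/2250000)*y^2*w + (1560413/37500)*t*y^2*w + (51063/500)*t^2*y^2*w + (9583/75)*t^3*y^2*w + (427/5)*t^4*y^2*w + (144/5)*t^5*y^2*w + 4*t^6*y^2*w + (14944831/2250000)*y^3 + (370922/9375)*t*y^3 + (11957/125)*t^2*y^3 + (9028/75)*t^3*y^3 + (412/5)*t^4*y^3 + (144/5)*t^5*y^3 + 4*t^6*y^3)"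
    unfolding nA by (rule P1id[OF t_def y_def w_def a])
  have e2: "9*N^2*(cmod A)^2 - D^2*(cmod C)^2 = w*((3616066157/625000)*y^2 + (5083385574/78125)*t*y^2 + (4774256787/15625)*t^2*y^2 + (2512882842/3125)*t^3*y^2 + (825897774/625)*t^4*y^2 + 1413744*t^5*y^2 + (24662144/25)*t^6*y^2 + (2162592/5)*t^7*y^2 + 107712*t^8*y^2 + 11520*t^9*y^2 + (1133013303/312500)*w*y + (796163943/31250)*t*w*y + (475225689/6250)*t^2*w*y + (15556404/125)*t^3*w*y + (3002814/25)*t^4*w*y + (1699272/25)*t^5*w*y + (103584/5)*t^6*w*y + 2592*t^7*w*y + (14426293/25000)*w^2 + (125097/50)*t*w^2 + (213291/50)*t^2*w^2 + (17736/5)*t^3*w^2 + 1422*t^4*w^2 + 216*t^5*w^2)"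
    unfolding nA nC N_def D_def by (rule P2id[OF t_def y_def w_def a c])
  have e3: "D * Re (B * cnj A) - 3*(2*g-1)^3 * (cmod A)^2 = w*((952469/75000)*y^2 + (404087/2500)*t*y^2 + (3512/5)*t^2*y^2 + (22339/15)*t^3*y^2 + 1692*t^4*y^2 + 996*t^5*y^2 + 240*t^6*y^2 + (113623/7500)*w*y + (10516/125)*t*w*y + (8673/50)*t^2*w*y + (791/5)*t^3*w*y + 54*t^4*w*y + (571/200)*w^2 + (141/20)*t*w^2 + (9/2)*t^2*w^2)"
    unfolding nA rB D_def by (rule P3id[OF t_def y_def w_def a b(1-4)])
  have "(cmod A)^2 \<ge> 1" using e1 mult_nonneg_nonneg[OF hy B1nn[OF ht hy hw]] by linarith
  then show "cmod A \<ge> 1" using power2_le_imp_le[of 1 "cmod A"] by simp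
  show "9*N^2*(cmod A)^2 - D^2*(cmod C)^2 \<ge> 0" using e2 B2nn[OF ht hy hw] hw by simp
  show "D * Re (B * cnj A) - 3*(2*g-1)^3 * (cmod A)^2 \<ge> 0" using e3 B3nn[OF ht hy hw] hw by simp
qed

lemma s1: fixes D N a c :: real assumes "9*N^2*a^2 - D^2*c^2 \<ge> 0" shows "(D*c)^2 \<le> (3*N*a)^2"
proof -
  have "(D*c)^2 = D^2*c^2" "(3*N*a)^2 = 9*N^2*a^2" by (simp_all add: power_mult_distrib)
  then show ?thesis using assms by linarith
qed
lemma s2: fixes D N a c :: real assumes "(D*c)^2 \<le> (3*N*a)^2" "N>0" "a\<ge>1" shows "D*c \<le> 3*N*a"
proof -
  have "0 \<le> 3*N" "0 \<le> a" using assms by linarith+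
  then have "0 \<le> 3*N*a" by (rule mult_nonneg_nonneg)
  then show ?thesis by (rule power2_le_imp_le[OF assms(1)])
qed
lemma s3: fixes D N a c :: real assumes "D*c \<le> 3*N*a" "D>0" "a\<ge>1" shows "(D*c)/(D*a) \<le> (3*N*a)/(D*a)"
proof -
  have "0 \<le> D" "0 \<le> a" using assms by linarith+
  then have "0 \<le> D*a" by (rule mult_nonneg_nonneg)
  then show ?thesis by (rule divide_right_mono[OF assms(1)])
qed
lemma s4: fixes D N a c :: real assumes "D>0" "a\<ge>1" shows "(D*c)/(D*a) = c/a" "(3*N*a)/(D*a) = 3*N/D"
  using assms by simp_all
lemma s5: fixes A C :: complex assumes "cmod C / cmod A \<le> X" shows "cmod (C / A) \<le> X"
  using assms by (simp add: norm_divide)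
lemma s6: fixes D P R m :: real assumes "D*R - 3*P*m \<ge> 0" "D>0" "m>0" shows "3*P/D \<le> R/m"
proof -
  have "R*D = D*R" by (rule mult.commute)
  then have "3*P*m \<le> R*D" using assms(1) by linarith
  then have le: "3*P*m/D \<le> R" unfolding pos_divide_le_eq[OF assms(2)] .
  have eq: "3*P*m/D = 3*P/D*m" by (rule times_divide_eq_left[symmetric])
  have "3*P/D*m \<le> R" by (rule ord_eq_le_trans[OF eq[symmetric] le])
  then show ?thesis unfolding pos_le_divide_eq[OF assms(3)] .
qed
lemma s7: fixes A :: complex assumes "cmod A \<ge> 1" shows "(cmod A)^2 > 0"
proof -
  have "cmod A > 0" using assms by linarith
  then show ?thesis by (rule zero_less_power)
qed

theorem mainTheorem11:
  fixes \<gamma> :: real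
  assumes "\<gamma> \<ge> 6/5"
  shows "sigmaF (siems4_a \<gamma>) = 1
    \<and> sigmaE (siems4_a \<gamma>) (siems4_c \<gamma>)
        = 3 * (8*\<gamma>^3 + 12*\<gamma>^2 - 6*\<gamma> + 1) / (4 * (6*\<gamma>^3 - 3*\<gamma> + 1))
    \<and> lambdaI (siems4_a \<gamma>) (siems4_b \<gamma>)
        = 3 * (2*\<gamma> - 1)^3 / (4 * (6*\<gamma>^3 - 3*\<gamma> + 1))
    \<and> IIE (siems4_a \<gamma>) (siems4_b \<gamma>) (siems4_c \<gamma>)
        = (2*\<gamma> - 1)^3 / (8*\<gamma>^3 + 12*\<gamma>^2 - 6*\<gamma> + 1)"
proof -
  define g where "g = \<gamma>"
  have hg: "g \<ge> 6/5" using assms g_def by simp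
  define D where "D = 4 * (6*g^3 - 3*g + 1)"
  define N where "N = 8*g^3 + 12*g^2 - 6*g + 1"
  have g2: "g^2 \<ge> (6/5)^2" using power_mono[OF hg, of 2] by simp
  have "g*g^2 \<ge> g*(6/5)^2" using g2 hg by (intro mult_left_mono) auto
  then have g3: "g^3 \<ge> g" using hg by (simp add: power2_eq_square power3_eq_cube)
  have Dpos: "D > 0" unfolding D_def using g3 hg by simp
  have "g^2 \<ge> 0" by simp
  then have Npos: "N > 0" unfolding N_def using g3 hg by linarith
  have mem0: "0 \<in> {0..<2*pi}" and mempi: "pi \<in> {0..<2*pi}" using pi_gt_zero by auto
  have A0: "symb (siems4_a g) 4 0 = 1"
    unfolding symb4 avals by (simp add: complex_eq_iff)
  have Api: "symb (siems4_a g) 4 pi = of_real (D/3)"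
    unfolding symb4 avals D_def by (simp add: complex_eq_iff; (algebra)?)
  have Cpi: "symb (siems4_c g) 4 pi = of_real N"
    unfolding symb4 cvals N_def by (simp add: complex_eq_iff; (algebra)?)
  have Bpi: "symb (siems4_b g) 5 pi = of_real ((2*g-1)^3)"
    unfolding symb5 bvals by (simp add: complex_eq_iff; (algebra)?)
  have sF: "sigmaF (siems4_a g) = 1"
    unfolding sigmaF_def
  proof (rule cSup_eq_maximum)
    show "1 \<in> (\<lambda>\<theta>. cmod (1 / symb (siems4_a g) 4 \<theta>)) ` {0..<2*pi}"
    proof -
      have h: "cmod (1 / symb (siems4_a g) 4 0) = 1" using A0 by simp
      show ?thesis by (rule image_eqI[where x=0]) (rule h[symmetric], rule mem0)
    qed
  next
    fix r assume "r \<in> (\<lambda>\<theta>. cmod (1 / symb (siems4_a g) 4 \<theta>)) ` {0..<2*pi}"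
    then obtain \<theta> where r: "r = cmod (1 / symb (siems4_a g) 4 \<theta>)" by auto
    have "cmod (symb (siems4_a g) 4 \<theta>) \<ge> 1" using pointwise(1)[OF hg] .
    then show "r \<le> 1" unfolding r by (simp add: norm_divide divide_le_eq)
  qed
  have sE: "sigmaE (siems4_a g) (siems4_c g) = 3*N/D"
    unfolding sigmaE_def
  proof (rule cSup_eq_maximum)
    have h: "cmod (symb (siems4_c g) 4 pi / symb (siems4_a g) 4 pi) = 3*N/D"
      unfolding Api Cpi using Dpos Npos by (simp del: of_real_divide add: of_real_divide[symmetric])
    show "3*N/D \<in> (\<lambda>\<theta>. cmod (symb (siems4_c g) 4 \<theta> / symb (siems4_a g) 4 \<theta>)) ` {0..<2*pi}"
      by (rule image_eqI[where x=pi]) (rule h[symmetric], rule mempi)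
  next
    fix r assume "r \<in> (\<lambda>\<theta>. cmod (symb (siems4_c g) 4 \<theta> / symb (siems4_a g) 4 \<theta>)) ` {0..<2*pi}"
    then obtain \<theta> where r: "r = cmod (symb (siems4_c g) 4 \<theta> / symb (siems4_a g) 4 \<theta>)" by auto
    define a where "a = cmod (symb (siems4_a g) 4 \<theta>)"
    define c where "c = cmod (symb (siems4_c g) 4 \<theta>)"
    have a1: "a \<ge> 1" using pointwise(1)[OF hg, of \<theta>] unfolding a_def by assumption
    have "9*N^2*a^2 - D^2*c^2 \<ge> 0" using pointwise(2)[OF hg, of \<theta>] unfolding a_def c_def D_def N_def by assumption
    then have "(D*c)^2 \<le> (3*N*a)^2" by (rule s1)
    then have "D*c \<le> 3*N*a" using Npos a1 by (rule s2)
    then have "(D*c)/(D*a) \<le> (3*N*a)/(D*a)" using Dpos a1 by (rule s3)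
    moreover have "(D*c)/(D*a) = c/a" "(3*N*a)/(D*a) = 3*N/D" using Dpos a1 by (rule s4)+
    ultimately have "c / a \<le> 3*N/D" by simp
    then show "r \<le> 3*N/D" unfolding r a_def c_def by (rule s5)
  qed
  have lI: "lambdaI (siems4_a g) (siems4_b g) = 3*(2*g-1)^3/D"
    unfolding lambdaI_def
  proof (rule cInf_eq_minimum)
    have h: "Re (symb (siems4_b g) 5 pi / symb (siems4_a g) 4 pi) = 3*(2*g-1)^3/D"
      unfolding Api Bpi using Dpos by simp
    show "3*(2*g-1)^3/D \<in> (\<lambda>\<theta>. Re (symb (siems4_b g) 5 \<theta> / symb (siems4_a g) 4 \<theta>)) ` {0..<2*pi}"
      by (rule image_eqI[where x=pi]) (rule h[symmetric], rule mempi)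
  next
    fix r assume "r \<in> (\<lambda>\<theta>. Re (symb (siems4_b g) 5 \<theta> / symb (siems4_a g) 4 \<theta>)) ` {0..<2*pi}"
    then obtain \<theta> where r: "r = Re (symb (siems4_b g) 5 \<theta> / symb (siems4_a g) 4 \<theta>)" by auto
    define A where "A = symb (siems4_a g) 4 \<theta>"
    define B where "B = symb (siems4_b g) 5 \<theta>"
    have a1: "cmod A \<ge> 1" using pointwise(1)[OF hg, of \<theta>] unfolding A_def by assumption
    have k: "D * Re (B * cnj A) - 3*(2*g-1)^3 * (cmod A)^2 \<ge> 0" using pointwise(3)[OF hg, of \<theta>] unfolding A_def B_def D_def by assumption
    have "r = Re (B * cnj A) / (cmod A)^2" unfolding r A_def[symmetric] B_def[symmetric]
      by (subst complex_div_cnj) (simp del: of_real_power add: of_real_power[symmetric])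
    moreover have "3*(2*g-1)^3/D \<le> Re (B * cnj A) / (cmod A)^2"
      using k Dpos s7[OF a1] by (rule s6)
    ultimately show "3*(2*g-1)^3/D \<le> r" by simp
  qed
  have iie: "IIE (siems4_a g) (siems4_b g) (siems4_c g) = (2*g-1)^3/N"
    unfolding IIE_def sE lI using Dpos Npos by simp
  show ?thesis using sF sE lI iie unfolding g_def D_def N_def by simp
qed

end
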